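(* Let $n\ge 3$ and let $D$ be a strongly connected spanning subdigraph of $\overleftrightarrow{C_n}$ having $k\ge 1$ asymmetric arcs. Then $rc^*(D)=n-1$ if $k\le 2$, and $rc^*(D)=n$ if $k\ge 3$. Moreover, if $k\ge 3$, then $rc^*(D)=src^*(D)=n$.
   Context: $\overleftrightarrow{C_n}$ denotes the biorientation of the cycle $C_n$ on $n$ vertices (each edge $uv$ replaced by arcs $uv$ and $vu$). An arc $uv$ of a digraph $D$ is asymmetric if $vu\notin A(D)$. For a strongly connected digraph $D$ and an arc-colouring $\Gamma:A(D)\to\{1,\dots,k\}$, a directed path is rainbow if its arcs have pairwise distinct colours. $\Gamma$ is rainbow connected if for every ordered pair of distinct vertices $x,y$ there is a rainbow directed $xy$-path; $rc^*(D)$ is the minimum $k$ admitting such a colouring. $\Gamma$ is strongly rainbow connected if for every ordered pair of distinct vertices $x,y$ there is a rainbow directed $xy$-path of length $d_D(x,y)$; $src^*(D)$ is the minimum such $k$. *)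

theory Defs
  imports Main
begin

definition bicycle_arcs :: "nat \<Rightarrow> (nat \<times> nat) set" where
  "bicycle_arcs n = {(i, Suc i mod n) | i. i < n} \<union> {(Suc i mod n, i) | i. i < n}"

definition asym_arcs :: "('a \<times> 'a) set \<Rightarrow> ('a \<times> 'a) set" where
  "asym_arcs A = {(u, v). (u, v) \<in> A \<and> (v, u) \<notin> A}"

definition dpath :: "('a \<times> 'a) set \<Rightarrow> 'a list \<Rightarrow> 'a \<Rightarrow> 'a \<Rightarrow> bool" where
  "dpath A p x y \<longleftrightarrow> p \<noteq> [] \<and> hd p = x \<and> last p = y \<and> distinct p \<and>
     (\<forall>i < length p - 1. (p ! i, p ! Suc i) \<in> A)"

definition path_arcs :: "'a list \<Rightarrow> ('a \<times> 'a) list" where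
  "path_arcs p = zip p (tl p)"

definition plen :: "'a list \<Rightarrow> nat" where
  "plen p = length p - 1"

definition rainbow :: "('a \<times> 'a \<Rightarrow> nat) \<Rightarrow> 'a list \<Rightarrow> bool" where
  "rainbow c p \<longleftrightarrow> distinct (map c (path_arcs p))"

definition strongly_connected :: "'a set \<Rightarrow> ('a \<times> 'a) set \<Rightarrow> bool" where
  "strongly_connected V A \<longleftrightarrow> A \<subseteq> V \<times> V \<and>
     (\<forall>x\<in>V. \<forall>y\<in>V. x \<noteq> y \<longrightarrow> (\<exists>p. dpath A p x y))"

definition ddist :: "('a \<times> 'a) set \<Rightarrow> 'a \<Rightarrow> 'a \<Rightarrow> nat" where
  "ddist A x y = (LEAST l. \<exists>p. dpath A p x y \<and> plen p = l)"

definition arc_colouring :: "('a \<times> 'a) set \<Rightarrow> ('a \<times> 'a \<Rightarrow> nat) \<Rightarrow> nat \<Rightarrow> bool" where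
  "arc_colouring A c k \<longleftrightarrow> (\<forall>e\<in>A. c e \<in> {1..k})"

definition rainbow_connected :: "'a set \<Rightarrow> ('a \<times> 'a) set \<Rightarrow> ('a \<times> 'a \<Rightarrow> nat) \<Rightarrow> nat \<Rightarrow> bool" where
  "rainbow_connected V A c k \<longleftrightarrow> arc_colouring A c k \<and>
     (\<forall>x\<in>V. \<forall>y\<in>V. x \<noteq> y \<longrightarrow> (\<exists>p. dpath A p x y \<and> rainbow c p))"

definition strongly_rainbow_connected :: "'a set \<Rightarrow> ('a \<times> 'a) set \<Rightarrow> ('a \<times> 'a \<Rightarrow> nat) \<Rightarrow> nat \<Rightarrow> bool" where
  "strongly_rainbow_connected V A c k \<longleftrightarrow> arc_colouring A c k \<and>
     (\<forall>x\<in>V. \<forall>y\<in>V. x \<noteq> y \<longrightarrow>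
        (\<exists>p. dpath A p x y \<and> plen p = ddist A x y \<and> rainbow c p))"

definition rc :: "'a set \<Rightarrow> ('a \<times> 'a) set \<Rightarrow> nat" where
  "rc V A = (LEAST k. \<exists>c. rainbow_connected V A c k)"

definition src :: "'a set \<Rightarrow> ('a \<times> 'a) set \<Rightarrow> nat" where
  "src V A = (LEAST k. \<exists>c. strongly_rainbow_connected V A c k)"

end

theory Submission
  imports Defs
begin


locale cyc = fixes n :: nat assumes n3: "3 \<le> n"
begin

definition stp :: "int \<Rightarrow> nat \<Rightarrow> nat" where
  "stp s u = nat ((int u + s) mod int n)"

definition wlk :: "int \<Rightarrow> nat \<Rightarrow> nat \<Rightarrow> nat" where
  "wlk s x i = nat ((int x + int i * s) mod int n)"

lemma npos: "(0::int) < int n" using n3 by simp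

lemma int_wlk: "int (wlk s x i) = (int x + int i * s) mod int n"
  unfolding wlk_def using npos by simp

lemma int_stp: "int (stp s u) = (int u + s) mod int n"
  unfolding stp_def using npos by simp

lemma wlk_lt: "wlk s x i < n"
  using int_wlk[of s x i] npos by (metis of_nat_less_iff pos_mod_bound)

lemma stp_lt: "stp s x < n"
  using int_stp[of s x] npos by (metis of_nat_less_iff pos_mod_bound)

lemma wlk0: "x < n \<Longrightarrow> wlk s x 0 = x"
  unfolding wlk_def by simp

lemma stp_wlk: "stp s (wlk s x i) = wlk s x (Suc i)"
proof -
  have "int (stp s (wlk s x i)) = ((int x + int i * s) mod int n + s) mod int n"
    by (simp add: int_stp int_wlk)
  also have "\<dots> = (int x + int i * s + s) mod int n" by (simp add: mod_add_left_eq)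
  also have "\<dots> = int (wlk s x (Suc i))" by (simp add: int_wlk algebra_simps)
  finally show ?thesis by simp
qed

lemma stp_stp: "s = 1 \<or> s = -1 \<Longrightarrow> w < n \<Longrightarrow> stp (-s) (stp s w) = w"
proof -
  assume s: "s = 1 \<or> s = -1" and w: "w < n"
  have "int (stp (-s) (stp s w)) = ((int w + s) mod int n - s) mod int n"
    by (simp add: int_stp)
  also have "\<dots> = (int w + s - s) mod int n" by (simp add: mod_diff_left_eq)
  also have "\<dots> = int w" using w by simp
  finally show ?thesis by simp
qed

lemma stp_back: "s = 1 \<or> s = -1 \<Longrightarrow> stp (-s) (wlk s x (Suc i)) = wlk s x i"
  by (metis stp_stp stp_wlk wlk_lt)

lemma wlk_inj: assumes s: "s = 1 \<or> s = -1" and "i < n" "j < n" "wlk s x i = wlk s x j"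
  shows "i = j"
proof -
  have "(int x + int i * s) mod int n = (int x + int j * s) mod int n"
    using assms(4) by (metis int_wlk)
  hence "int n dvd (int x + int i * s) - (int x + int j * s)"
    by (simp add: mod_eq_dvd_iff)
  hence d: "int n dvd (int i - int j) * s" by (simp add: algebra_simps)
  hence "int n dvd (int i - int j)" using s by (metis dvd_minus_iff mult_1_right mult_minus1_right)
  moreover have "\<bar>int i - int j\<bar> < int n" using assms by auto
  ultimately have "int i - int j = 0"
    by (metis dvd_imp_le_int abs_of_nat not_le)
  thus ?thesis by simp
qed

lemma wlk_neg: assumes "j \<le> n" shows "wlk (-s) x j = wlk s x (n - j)"
proof -
  have "int (wlk s x (n - j)) = (int x + (int n - int j) * s) mod int n"
    using assms by (simp add: int_wlk of_nat_diff)
  also have "\<dots> = ((int x - int j * s) + s * int n) mod int n" by (simp add: algebra_simps)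
  also have "\<dots> = (int x - int j * s) mod int n" by (rule mod_mult_self1)
  also have "\<dots> = int (wlk (-s) x j)" by (simp add: int_wlk)
  finally show ?thesis by simp
qed

definition dst :: "int \<Rightarrow> nat \<Rightarrow> nat \<Rightarrow> nat" where
  "dst s x y = nat (((int y - int x) * s) mod int n)"

lemma dst_lt: "dst s x y < n"
  unfolding dst_def using npos by (simp add: nat_less_iff)

lemma wlk_dst: assumes s: "s = 1 \<or> s = -1" and y: "y < n" shows "wlk s x (dst s x y) = y"
proof -
  have ss: "s * s = 1" using s by auto
  have "int (wlk s x (dst s x y)) = (int x + ((int y - int x) * s) mod int n * s) mod int n"
    unfolding int_wlk dst_def using npos by simp
  also have "\<dots> = (int x + ((int y - int x) * s) * s) mod int n"
    by (metis mod_add_right_eq mod_mult_left_eq)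
  also have "\<dots> = int y mod int n"
  proof -
    have "int x + (int y - int x) * s * s = int y" using s by auto
    thus ?thesis by (simp only:)
  qed
  also have "\<dots> = int y" using y by simp
  finally show ?thesis by simp
qed

lemma dst_pos: assumes s: "s = 1 \<or> s = -1" and "x < n" "y < n" "x \<noteq> y" shows "dst s x y \<noteq> 0"
  using wlk_dst[OF s assms(3), of x] wlk0[OF assms(2), of s] assms(4) by metis

lemma stp_ne: assumes "s = 1 \<or> s = -1" shows "stp s u \<noteq> stp (-s) u"
proof
  assume "stp s u = stp (-s) u"
  hence "(int u + s) mod int n = (int u - s) mod int n" by (metis int_stp diff_conv_add_uminus)
  hence "int n dvd (int u + s) - (int u - s)" by (simp add: mod_eq_dvd_iff)
  hence "int n dvd 2" using assms by auto
  hence "int n \<le> 2" by (rule zdvd_imp_le) simp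
  thus False using n3 by simp
qed

lemma stp_self: assumes "s = 1 \<or> s = -1" "u < n" shows "stp s u \<noteq> u"
proof
  assume "stp s u = u"
  hence "(int u + s) mod int n = int u mod int n" using assms by (metis int_stp mod_less of_nat_mod)
  hence "int n dvd (int u + s) - int u" by (simp add: mod_eq_dvd_iff)
  hence "int n dvd 1" using assms by auto
  thus False using n3 by simp
qed

lemma wlk_last: assumes "s = 1 \<or> s = -1" "t < n" shows "wlk s (stp s t) (n - 1) = t"
proof -
  have "int (wlk s (stp s t) (n - 1)) = ((int t + s) mod int n + (int n - 1) * s) mod int n"
    using n3 by (simp add: int_wlk int_stp of_nat_diff)
  also have "\<dots> = (int t + s + (int n - 1) * s) mod int n" by (simp add: mod_add_left_eq)
  also have "\<dots> = (int t + s * int n) mod int n" by (simp add: algebra_simps)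
  also have "\<dots> = int t" using assms by simp
  finally show ?thesis by simp
qed

lemma bic_iff: "(u, v) \<in> bicycle_arcs n \<longleftrightarrow> u < n \<and> (v = stp 1 u \<or> v = stp (-1) u)"
proof
  assume "(u, v) \<in> bicycle_arcs n"
  then obtain i where i: "i < n" "(u = i \<and> v = Suc i mod n) \<or> (u = Suc i mod n \<and> v = i)"
    unfolding bicycle_arcs_def by auto
  show "u < n \<and> (v = stp 1 u \<or> v = stp (-1) u)"
  proof (cases "u = i \<and> v = Suc i mod n")
    case True
    have "int (stp 1 u) = int v" using True by (simp add: int_stp of_nat_mod add.commute)
    thus ?thesis using True i by auto
  next
    case False
    hence uv: "u = Suc i mod n" "v = i" using i by auto
    have "int (stp (-1) u) = (int (Suc i) mod int n - 1) mod int n" by (simp add: int_stp uv of_nat_mod)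
    also have "\<dots> = (int (Suc i) - 1) mod int n" by (simp add: mod_diff_left_eq)
    also have "\<dots> = int v" using uv i by simp
    finally show ?thesis using uv npos by (simp del: of_nat_Suc)
  qed
next
  assume a: "u < n \<and> (v = stp 1 u \<or> v = stp (-1) u)"
  show "(u, v) \<in> bicycle_arcs n"
  proof (cases "v = stp 1 u")
    case True
    have "int v = int (Suc u mod n)" using True by (simp add: int_stp of_nat_mod add.commute)
    hence "v = Suc u mod n" by simp
    thus ?thesis using a unfolding bicycle_arcs_def by auto
  next
    case False
    hence v: "v = stp (-1) u" using a by auto
    have "int (Suc v mod n) = ((int u - 1) mod int n + 1) mod int n"
      by (simp add: v int_stp of_nat_mod add.commute)
    also have "\<dots> = int u" using a by (simp add: mod_add_left_eq)
    finally have "u = Suc v mod n" by simp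
    moreover have "v < n" using v stp_lt by simp
    ultimately show ?thesis unfolding bicycle_arcs_def by auto
  qed
qed

end



lemma path_arcs_nth: "i < length p - 1 \<Longrightarrow> path_arcs p ! i = (p ! i, p ! Suc i)"
  unfolding path_arcs_def by (simp add: nth_tl)

lemma length_path_arcs: "length (path_arcs p) = length p - 1"
  unfolding path_arcs_def by simp

lemma path_arcs_map: "path_arcs (map f [0..<Suc d]) = map (\<lambda>i. (f i, f (Suc i))) [0..<d]"
  by (rule nth_equalityI) (simp_all add: length_path_arcs path_arcs_nth del: upt_Suc)

lemma dpath_map:
  assumes "inj_on f {0..<Suc d}" "\<And>i. i < d \<Longrightarrow> (f i, f (Suc i)) \<in> A"
  shows "dpath A (map f [0..<Suc d]) (f 0) (f d)"
  unfolding dpath_def using assms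
  by (auto simp: distinct_map last_map hd_map simp del: upt_Suc)

lemma rainbow_map: "rainbow c (map f [0..<Suc d]) \<longleftrightarrow> inj_on (\<lambda>i. c (f i, f (Suc i))) {0..<d}"
  unfolding rainbow_def path_arcs_map by (simp add: distinct_map comp_def)

context cyc
begin

lemma path_shape:
  assumes B: "B \<subseteq> bicycle_arcs n" and dp: "dpath B p x y" and x: "x < n"
  shows "\<exists>s. (s = 1 \<or> s = -1) \<and> (\<forall>i<length p. p ! i = wlk s x i)"
proof -
  have ne: "p \<noteq> []" and hd: "hd p = x" and dist: "distinct p"
    and arc: "\<And>i. Suc i < length p \<Longrightarrow> (p ! i, p ! Suc i) \<in> bicycle_arcs n"
    using dp B unfolding dpath_def by auto
  have p0: "p ! 0 = x" using ne hd by (simp add: hd_conv_nth)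
  show ?thesis
  proof (cases "length p = 1")
    case True
    thus ?thesis using p0 x by (intro exI[of _ 1]) (auto simp: wlk0)
  next
    case False
    hence l2: "Suc 0 < length p" using ne by (cases p) auto
    from arc[OF l2] p0 obtain s where s: "s = 1 \<or> s = -1" and p1: "p ! 1 = stp s x"
      unfolding bic_iff by auto
    have claim: "Suc i < length p \<longrightarrow> p ! i = wlk s x i \<and> p ! Suc i = wlk s x (Suc i)" for i
    proof (induction i)
      case 0
      then show ?case using p0 p1 x by (simp add: wlk0 flip: stp_wlk)
    next
      case (Suc i)
      show ?case
      proof
        assume l: "Suc (Suc i) < length p"
        hence IH: "p ! i = wlk s x i" "p ! Suc i = wlk s x (Suc i)" using Suc by auto
        have "p ! Suc (Suc i) = stp s (p ! Suc i) \<or> p ! Suc (Suc i) = stp (-s) (p ! Suc i)"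
          using arc[OF l] s unfolding bic_iff by auto
        moreover have "p ! Suc (Suc i) \<noteq> p ! i" using dist l nth_eq_iff_index_eq by fastforce
        moreover have "stp (-s) (p ! Suc i) = p ! i" using IH stp_back[OF s] by simp
        ultimately have "p ! Suc (Suc i) = wlk s x (Suc (Suc i))" using IH by (simp add: stp_wlk)
        thus "p ! Suc i = wlk s x (Suc i) \<and> p ! Suc (Suc i) = wlk s x (Suc (Suc i))" using IH by simp
      qed
    qed
    have "\<forall>i<length p. p ! i = wlk s x i"
    proof (intro allI impI)
      fix i assume "i < length p"
      thus "p ! i = wlk s x i"
        using claim[of 0] claim l2 by (cases i) auto
    qed
    thus ?thesis using s by blast
  qed
qed

lemma path_len:
  assumes "\<forall>i<length p. p ! i = wlk s x i" "distinct p"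
  shows "length p \<le> n"
proof -
  have "set p \<subseteq> {0..<n}" using assms(1) wlk_lt by (auto simp: in_set_conv_nth)
  hence "card (set p) \<le> n" by (metis card_atLeastLessThan card_mono diff_zero finite_atLeastLessThan)
  thus ?thesis using distinct_card[OF assms(2)] by simp
qed

end

locale cycA = cyc + fixes A assumes Asub: "A \<subseteq> bicycle_arcs n"
begin

lemma forced:
  assumes s: "s = 1 \<or> s = -1" and t: "t < n" and nb: "(stp s t, t) \<notin> A"
    and dp: "dpath A p (stp s t) t"
  shows "length p = n \<and> (\<forall>i<n. p ! i = wlk s (stp s t) i)"
proof -
  let ?v = "stp s t"
  obtain s' where s': "s' = 1 \<or> s' = -1" and P: "\<forall>i<length p. p ! i = wlk s' ?v i"
    using path_shape[OF Asub dp stp_lt] by blast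
  have ne: "p \<noteq> []" and hd: "hd p = ?v" and lst: "last p = t" and dist: "distinct p"
    and arc: "\<And>i. Suc i < length p \<Longrightarrow> (p ! i, p ! Suc i) \<in> A"
    using dp unfolding dpath_def by auto
  have len: "length p \<le> n" using path_len[OF P dist] .
  have vt: "?v \<noteq> t" using stp_self[OF s t] .
  have l2: "Suc 0 < length p"
  proof (rule ccontr)
    assume "\<not> ?thesis" hence "length p = 1" using ne by (cases p) auto
    hence "hd p = last p" using ne by (cases p) auto
    thus False using hd lst vt by simp
  qed
  have lastn: "p ! (length p - 1) = t" using lst ne by (simp add: last_conv_nth)
  have "s' = s"
  proof (rule ccontr)
    assume "s' \<noteq> s" hence ms: "s' = -s" using s s' by auto
    have "p ! 1 = wlk s' ?v 1" using P l2 by simp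
    also have "\<dots> = stp s' (wlk s' ?v 0)" by (simp add: stp_wlk)
    also have "\<dots> = t" using ms stp_stp[OF s t] by (simp add: wlk0 stp_lt)
    finally have p1: "p ! 1 = t" .
    hence "1 = length p - 1" using nth_eq_iff_index_eq[OF dist, of 1 "length p - 1"] lastn l2 by simp
    hence "length p = 2" by simp
    hence "(p ! 0, p ! 1) \<in> A" using arc[of 0] by simp
    moreover have "p ! 0 = ?v" using hd ne by (simp add: hd_conv_nth)
    ultimately show False using p1 nb by simp
  qed
  hence "wlk s ?v (length p - 1) = wlk s ?v (n - 1)"
    using P lastn wlk_last[OF s t] l2 by simp
  hence "length p - 1 = n - 1" using wlk_inj[OF s] len l2 n3 by simp
  hence "length p = n" using l2 n3 by simp
  thus ?thesis using P \<open>s' = s\<close> by simp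
qed

end



context cyc begin
lemma stp1: "stp 1 u = Suc u mod n"
proof -
  have "int (stp 1 u) = int (Suc u mod n)" by (simp add: int_stp of_nat_mod add.commute)
  thus ?thesis by simp
qed
end

locale cycS = cycA + assumes sc: "strongly_connected {0..<n} A"
begin

lemma asym_dir: assumes "(u, v) \<in> asym_arcs A"
  shows "u < n \<and> (\<exists>s. (s = 1 \<or> s = -1) \<and> v = stp s u)"
proof -
  have "(u, v) \<in> bicycle_arcs n" using assms Asub unfolding asym_arcs_def by auto
  thus ?thesis unfolding bic_iff by blast
qed

lemma fwd_all: assumes s: "s = 1 \<or> s = -1" and t: "t < n" and as: "(t, stp s t) \<in> asym_arcs A"
  and w: "w < n" shows "(w, stp s w) \<in> A"
proof (cases "w = t")
  case True thus ?thesis using as unfolding asym_arcs_def by simp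
next
  case False
  let ?v = "stp s t"
  have nb: "(?v, t) \<notin> A" using as unfolding asym_arcs_def by simp
  have vV: "?v \<in> {0..<n}" "t \<in> {0..<n}" using stp_lt t by auto
  obtain p where dp: "dpath A p ?v t" using sc vV stp_self[OF s t]
    unfolding strongly_connected_def by blast
  have F: "length p = n" "\<forall>i<n. p ! i = wlk s ?v i" using forced[OF s t nb dp] by auto
  define i where "i = dst s ?v w"
  have wi: "wlk s ?v i = w" unfolding i_def using wlk_dst[OF s w] .
  have il: "i < n" unfolding i_def by (rule dst_lt)
  have "i \<noteq> n - 1" using wi wlk_last[OF s t] False by auto
  hence il2: "Suc i < length p" using il F n3 by simp
  have "(p ! i, p ! Suc i) \<in> A" using dp il2 unfolding dpath_def by auto
  thus ?thesis using F il il2 wi by (simp flip: stp_wlk)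
qed

lemma same_dir: assumes s: "s = 1 \<or> s = -1" and t: "t < n" and as: "(t, stp s t) \<in> asym_arcs A"
  and as2: "(u, v) \<in> asym_arcs A" shows "u < n \<and> v = stp s u"
proof -
  obtain s' where s': "s' = 1 \<or> s' = -1" and v: "v = stp s' u" and u: "u < n"
    using asym_dir[OF as2] by blast
  show ?thesis
  proof (rule ccontr)
    assume "\<not> ?thesis"
    hence ms: "s' = -s" using s s' v u by auto
    have "stp s v = u" using v ms stp_stp[of "-s" u] s u by auto
    hence "(v, u) \<in> A" using fwd_all[OF s t as, of v] v stp_lt by auto
    thus False using as2 unfolding asym_arcs_def by simp
  qed
qed

lemma inj_tail:
  assumes rc: "rainbow_connected {0..<n} A c k" and s: "s = 1 \<or> s = -1" and t: "t < n"
    and as: "(t, stp s t) \<in> asym_arcs A"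
  shows "inj_on (\<lambda>w. c (w, stp s w)) ({0..<n} - {t})"
proof (rule inj_onI)
  let ?v = "stp s t"
  have nb: "(?v, t) \<notin> A" using as unfolding asym_arcs_def by simp
  have vV: "?v \<in> {0..<n}" "t \<in> {0..<n}" using stp_lt t by auto
  obtain p where dp: "dpath A p ?v t" and rb: "rainbow c p" using rc vV stp_self[OF s t]
    unfolding rainbow_connected_def by blast
  have F: "length p = n" "\<forall>i<n. p ! i = wlk s ?v i" using forced[OF s t nb dp] by auto
  have D: "distinct (map c (path_arcs p))" using rb unfolding rainbow_def .
  have key: "\<exists>i. i < n - 1 \<and> path_arcs p ! i = (w, stp s w)" if "w \<in> {0..<n} - {t}" for w
  proof -
    define i where "i = dst s ?v w"
    have wi: "wlk s ?v i = w" unfolding i_def using wlk_dst[OF s] that by simp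
    have il: "i < n" unfolding i_def by (rule dst_lt)
    have "i \<noteq> n - 1" using wi wlk_last[OF s t] that by auto
    hence "i < n - 1" using il by simp
    moreover have "path_arcs p ! i = (w, stp s w)"
      using calculation F wi by (simp add: path_arcs_nth flip: stp_wlk)
    ultimately show ?thesis by blast
  qed
  fix w1 w2 assume w1: "w1 \<in> {0..<n} - {t}" and w2: "w2 \<in> {0..<n} - {t}"
    and eq: "c (w1, stp s w1) = c (w2, stp s w2)"
  obtain i1 where i1: "i1 < n - 1" "path_arcs p ! i1 = (w1, stp s w1)" using key[OF w1] by blast
  obtain i2 where i2: "i2 < n - 1" "path_arcs p ! i2 = (w2, stp s w2)" using key[OF w2] by blast
  have ceq: "c (path_arcs p ! i1) = c (path_arcs p ! i2)" using i1 i2 eq by simp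
  have "i1 = i2" using nth_eq_iff_index_eq[OF D, of i1 i2] i1(1) i2(1) F ceq
    by (simp add: length_path_arcs)
  thus "w1 = w2" using i1 i2 by simp
qed

lemma lb1:
  assumes rc: "rainbow_connected {0..<n} A c k" and s: "s = 1 \<or> s = -1" and t: "t < n"
    and as: "(t, stp s t) \<in> asym_arcs A"
  shows "n - 1 \<le> k"
proof -
  let ?h = "\<lambda>w. c (w, stp s w)"
  have "?h ` ({0..<n} - {t}) \<subseteq> {1..k}"
    using fwd_all[OF s t as] rc unfolding rainbow_connected_def arc_colouring_def by auto
  hence "card (?h ` ({0..<n} - {t})) \<le> k" by (metis card_atLeastAtMost card_mono diff_Suc_1 finite_atLeastAtMost)
  moreover have "card (?h ` ({0..<n} - {t})) = n - 1"
    using card_image[OF inj_tail[OF assms]] t by simp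
  ultimately show ?thesis by simp
qed

lemma lb3:
  assumes rc: "rainbow_connected {0..<n} A c k" and s: "s = 1 \<or> s = -1"
    and t: "t1 < n" "t2 < n" "t3 < n" and d: "t1 \<noteq> t2" "t1 \<noteq> t3" "t2 \<noteq> t3"
    and as: "(t1, stp s t1) \<in> asym_arcs A" "(t2, stp s t2) \<in> asym_arcs A" "(t3, stp s t3) \<in> asym_arcs A"
  shows "n \<le> k"
proof -
  let ?h = "\<lambda>w. c (w, stp s w)"
  have I1: "inj_on ?h ({0..<n} - {t1})" using inj_tail[OF rc s t(1) as(1)] .
  have I2: "inj_on ?h ({0..<n} - {t2})" using inj_tail[OF rc s t(2) as(2)] .
  have I3: "inj_on ?h ({0..<n} - {t3})" using inj_tail[OF rc s t(3) as(3)] .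
  have inj: "inj_on ?h {0..<n}"
  proof (rule inj_onI)
    fix w1 w2 assume w: "w1 \<in> {0..<n}" "w2 \<in> {0..<n}" and eq: "?h w1 = ?h w2"
    show "w1 = w2"
    proof (cases "w1 \<noteq> t1 \<and> w2 \<noteq> t1")
      case True thus ?thesis using I1 w eq by (auto dest: inj_onD)
    next
      case F1: False
      show ?thesis
      proof (cases "w1 \<noteq> t2 \<and> w2 \<noteq> t2")
        case True thus ?thesis using I2 w eq by (auto dest: inj_onD)
      next
        case F2: False
        have "w1 \<noteq> t3 \<and> w2 \<noteq> t3 \<or> w1 = w2" using F1 F2 d by auto
        thus ?thesis using I3 w eq by (auto dest: inj_onD)
      qed
    qed
  qed
  have "?h ` {0..<n} \<subseteq> {1..k}"
    using fwd_all[OF s t(1) as(1)] rc unfolding rainbow_connected_def arc_colouring_def by auto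
  hence "card (?h ` {0..<n}) \<le> k" by (metis card_atLeastAtMost card_mono diff_Suc_1 finite_atLeastAtMost)
  moreover have "card (?h ` {0..<n}) = n" using card_image[OF inj] by simp
  ultimately show ?thesis by simp
qed

end



context cyc begin

lemma arc_norm: assumes "(u, v) \<in> bicycle_arcs n"
  shows "(if v = Suc u mod n then u else v) < n \<and>
    ((u, v) = ((if v = Suc u mod n then u else v), stp 1 (if v = Suc u mod n then u else v)) \<or>
     (u, v) = (stp 1 (if v = Suc u mod n then u else v), (if v = Suc u mod n then u else v)))"
proof -
  have u: "u < n" and v: "v = stp 1 u \<or> v = stp (-1) u" using assms unfolding bic_iff by auto
  show ?thesis
  proof (cases "v = Suc u mod n")
    case True thus ?thesis using u by (simp add: stp1)
  next
    case False
    hence v2: "v = stp (-1) u" using v by (simp add: stp1)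
    have "stp 1 v = u" using v2 stp_stp[of "-1" u] u by simp
    thus ?thesis using False v2 stp_lt by auto
  qed
qed

definition ecol :: "nat \<times> nat \<Rightarrow> nat" where
  "ecol e = Suc (if snd e = Suc (fst e) mod n then fst e else snd e)"

lemma ecol_eq: assumes "(u, v) \<in> bicycle_arcs n" "(u', v') \<in> bicycle_arcs n"
  "ecol (u, v) = ecol (u', v')" shows "(u', v') = (u, v) \<or> (u', v') = (v, u)"
  using arc_norm[OF assms(1)] arc_norm[OF assms(2)] assms(3) unfolding ecol_def
  by (auto split: if_splits)

lemma rainbow_any: assumes B: "B \<subseteq> bicycle_arcs n" and dp: "dpath B p x y"
  shows "rainbow ecol p"
  unfolding rainbow_def distinct_conv_nth
proof (intro allI impI)
  fix i j assume i: "i < length (map ecol (path_arcs p))" and j: "j < length (map ecol (path_arcs p))"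
    and ij: "i \<noteq> j"
  have dist: "distinct p" and arc: "\<And>k. k < length p - 1 \<Longrightarrow> (p ! k, p ! Suc k) \<in> bicycle_arcs n"
    using dp B unfolding dpath_def by auto
  have i': "i < length p - 1" and j': "j < length p - 1" using i j by (auto simp: length_path_arcs)
  show "map ecol (path_arcs p) ! i \<noteq> map ecol (path_arcs p) ! j"
  proof
    assume "map ecol (path_arcs p) ! i = map ecol (path_arcs p) ! j"
    hence "ecol (p ! i, p ! Suc i) = ecol (p ! j, p ! Suc j)"
      using i' j' by (simp add: length_path_arcs path_arcs_nth)
    hence "(p ! j, p ! Suc j) = (p ! i, p ! Suc i) \<or> (p ! j, p ! Suc j) = (p ! Suc i, p ! i)"
      using ecol_eq arc[OF i'] arc[OF j'] by blast
    moreover have "p ! j = p ! i \<longleftrightarrow> j = i" using nth_eq_iff_index_eq[OF dist] i' j' by simp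
    moreover have "p ! j = p ! Suc i \<longleftrightarrow> j = Suc i" using nth_eq_iff_index_eq[OF dist] i' j' by simp
    moreover have "p ! Suc j = p ! i \<longleftrightarrow> Suc j = i" using nth_eq_iff_index_eq[OF dist] i' j' by simp
    ultimately show False using ij by auto
  qed
qed

end

context cycA begin
lemma ecol_col: "arc_colouring A ecol n"
  unfolding arc_colouring_def
proof
  fix e assume "e \<in> A"
  hence "e \<in> bicycle_arcs n" using Asub by auto
  then obtain u v where e: "e = (u, v)" "(u, v) \<in> bicycle_arcs n" by (cases e) auto
  show "ecol e \<in> {1..n}" using arc_norm[OF e(2)] e(1) unfolding ecol_def by auto
qed
end

context cycS begin

lemma src_ub: "strongly_rainbow_connected {0..<n} A ecol n"
  unfolding strongly_rainbow_connected_def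
proof (intro conjI ecol_col ballI impI)
  fix x y assume xy: "x \<in> {0..<n}" "y \<in> {0..<n}" "x \<noteq> y"
  hence ex: "\<exists>p. dpath A p x y" using sc unfolding strongly_connected_def by blast
  have "\<exists>p. dpath A p x y \<and> plen p = ddist A x y"
  proof -
    have "\<exists>l p. dpath A p x y \<and> plen p = l" using ex by blast
    thus ?thesis unfolding ddist_def by (rule LeastI_ex)
  qed
  then obtain p where "dpath A p x y" "plen p = ddist A x y" by blast
  thus "\<exists>p. dpath A p x y \<and> plen p = ddist A x y \<and> rainbow ecol p"
    using rainbow_any[OF Asub] by blast
qed

end



context cycS begin

lemma ub2:
  assumes s: "s = 1 \<or> s = -1" and ta: "ta < n" and tb: "tb < n" and tab: "ta \<noteq> tb"
    and as: "(ta, stp s ta) \<in> asym_arcs A"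
    and hyp: "\<And>w. w < n \<Longrightarrow> (w, stp s w) \<in> asym_arcs A \<Longrightarrow> w = ta \<or> w = tb"
  shows "\<exists>c. rainbow_connected {0..<n} A c (n - 1)"
proof -
  have ms: "-s = 1 \<or> -s = -1" using s by auto
  define tl :: "nat \<times> nat \<Rightarrow> nat" where "tl e = (if snd e = stp s (fst e) then fst e else snd e)" for e
  define g :: "nat \<Rightarrow> nat" where
    "g w = (let j = if w = tb then ta else w in if j < tb then Suc j else j)" for w
  define col where "col e = g (tl e)" for e
  have tl_f: "tl (w, stp s w) = w" for w unfolding tl_def by simp
  have tl_b: "tl (w, stp (-s) w) = stp (-s) w" for w
    unfolding tl_def using stp_ne[OF s, of w] by auto
  have g_rng: "g w \<in> {1..n - 1}" if "w < n" for w
    using that ta tb tab unfolding g_def Let_def by auto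
  have g_inj: "w1 = w2 \<or> (w1 \<in> {ta, tb} \<and> w2 \<in> {ta, tb})" if "g w1 = g w2" "w1 < n" "w2 < n" for w1 w2
    using that tab unfolding g_def Let_def by (auto split: if_splits)
  have fwd: "(w, stp s w) \<in> A" if "w < n" for w using fwd_all[OF s ta as that] .
  have colA: "arc_colouring A col (n - 1)"
    unfolding arc_colouring_def
  proof
    fix e assume "e \<in> A"
    then obtain u v where e: "e = (u, v)" "(u, v) \<in> bicycle_arcs n" using Asub by (cases e) auto
    have u: "u < n" and v: "v = stp s u \<or> v = stp (-s) u" using e(2) s unfolding bic_iff by auto
    have "tl e < n" using v u e(1) tl_f tl_b stp_lt by auto
    thus "col e \<in> {1..n - 1}" unfolding col_def using g_rng by blast
  qed
  have "\<exists>p. dpath A p x y \<and> rainbow col p" if xy: "x < n" "y < n" "x \<noteq> y" for x y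
  proof -
    define d where "d = dst s x y"
    have d0: "d \<noteq> 0" unfolding d_def using dst_pos[OF s xy] .
    have dn: "d < n" unfolding d_def by (rule dst_lt)
    have wd: "wlk s x d = y" unfolding d_def using wlk_dst[OF s xy(2)] .
    show ?thesis
    proof (cases "(\<exists>i<d. wlk s x i = ta) \<and> (\<exists>i<d. wlk s x i = tb)")
      case False
      let ?p = "map (wlk s x) [0..<Suc d]"
      have dp: "dpath A ?p (wlk s x 0) (wlk s x d)"
      proof (rule dpath_map)
        show "inj_on (wlk s x) {0..<Suc d}" using wlk_inj[OF s] dn by (intro inj_onI) auto
        show "(wlk s x i, wlk s x (Suc i)) \<in> A" if "i < d" for i
          using fwd[OF wlk_lt] by (simp flip: stp_wlk)
      qed
      have rb: "rainbow col ?p" unfolding rainbow_map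
      proof (rule inj_onI)
        fix i j assume i: "i \<in> {0..<d}" and j: "j \<in> {0..<d}"
          and eq: "col (wlk s x i, wlk s x (Suc i)) = col (wlk s x j, wlk s x (Suc j))"
        hence "g (wlk s x i) = g (wlk s x j)" unfolding col_def by (simp add: tl_f flip: stp_wlk)
        hence G: "wlk s x i = wlk s x j \<or> (wlk s x i \<in> {ta, tb} \<and> wlk s x j \<in> {ta, tb})"
          using g_inj[of "wlk s x i" "wlk s x j"] wlk_lt by blast
        have "wlk s x i = wlk s x j"
        proof (rule ccontr)
          assume ne: "wlk s x i \<noteq> wlk s x j"
          hence "(wlk s x i = ta \<and> wlk s x j = tb) \<or> (wlk s x i = tb \<and> wlk s x j = ta)" using G by auto
          thus False using False i j by auto
        qed
        thus "i = j" using wlk_inj[OF s] i j dn by auto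
      qed
      show ?thesis using dp rb wd wlk0[OF xy(1)] by auto
    next
      case True
      then obtain i1 i2 where i12: "i1 < d" "wlk s x i1 = ta" "i2 < d" "wlk s x i2 = tb" by blast
      have avoid: "wlk s x m \<noteq> ta \<and> wlk s x m \<noteq> tb" if "d \<le> m" "m < n" for m
        using i12 wlk_inj[OF s, of m i1 x] wlk_inj[OF s, of m i2 x] that dn by auto
      let ?p = "map (wlk (-s) x) [0..<Suc (n - d)]"
      have z: "wlk (-s) x (Suc i) = wlk s x (n - Suc i)" if "i < n - d" for i
        using wlk_neg[of "Suc i" s x] that by simp
      have dp: "dpath A ?p (wlk (-s) x 0) (wlk (-s) x (n - d))"
      proof (rule dpath_map)
        show "inj_on (wlk (-s) x) {0..<Suc (n - d)}"
        proof (rule inj_onI)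
          fix a b assume "a \<in> {0..<Suc (n - d)}" "b \<in> {0..<Suc (n - d)}" "wlk (-s) x a = wlk (-s) x b"
          moreover have "a < n" "b < n" using calculation d0 dn by auto
          ultimately show "a = b" using wlk_inj[OF ms] by blast
        qed
        show "(wlk (-s) x i, wlk (-s) x (Suc i)) \<in> A" if i: "i < n - d" for i
        proof (rule ccontr)
          let ?w = "wlk (-s) x i" and ?z = "wlk (-s) x (Suc i)"
          assume nA: "(?w, ?z) \<notin> A"
          have zw: "stp s ?z = ?w" using stp_back[OF ms] by simp
          have "(?z, stp s ?z) \<in> A" using fwd[OF wlk_lt] .
          hence "(?z, stp s ?z) \<in> asym_arcs A" using nA zw
            unfolding asym_arcs_def by simp
          hence "?z = ta \<or> ?z = tb" using hyp wlk_lt by blast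
          thus False using avoid[of "n - Suc i"] z[OF i] i by auto
        qed
      qed
      have rb: "rainbow col ?p" unfolding rainbow_map
      proof (rule inj_onI)
        fix i j assume i: "i \<in> {0..<n - d}" and j: "j \<in> {0..<n - d}"
          and eq: "col (wlk (-s) x i, wlk (-s) x (Suc i)) = col (wlk (-s) x j, wlk (-s) x (Suc j))"
        have ci: "col (wlk (-s) x i, wlk (-s) x (Suc i)) = g (wlk s x (n - Suc i))" if h: "Suc i \<le> n" for i
        proof -
          have "col (wlk (-s) x i, wlk (-s) x (Suc i)) = col (wlk (-s) x i, stp (-s) (wlk (-s) x i))"
            by (simp add: stp_wlk)
          also have "\<dots> = g (stp (-s) (wlk (-s) x i))" unfolding col_def using tl_b by simp
          also have "\<dots> = g (wlk (-s) x (Suc i))" by (simp add: stp_wlk)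
          also have "\<dots> = g (wlk s x (n - Suc i))" using wlk_neg[OF h] by simp
          finally show ?thesis .
        qed
        have "g (wlk s x (n - Suc i)) = g (wlk s x (n - Suc j))" using eq ci[of i] ci[of j] i j by simp
        hence G: "wlk s x (n - Suc i) = wlk s x (n - Suc j) \<or>
            (wlk s x (n - Suc i) \<in> {ta, tb} \<and> wlk s x (n - Suc j) \<in> {ta, tb})"
          using g_inj[of "wlk s x (n - Suc i)" "wlk s x (n - Suc j)"] wlk_lt by blast
        have "d \<le> n - Suc i" "n - Suc i < n" using i d0 by auto
        hence "wlk s x (n - Suc i) \<notin> {ta, tb}" using avoid by blast
        hence "wlk s x (n - Suc i) = wlk s x (n - Suc j)" using G by blast
        hence "n - Suc i = n - Suc j" using wlk_inj[OF s] i j by auto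
        thus "i = j" using i j by auto
      qed
      have "wlk (-s) x (n - d) = y" using wlk_neg[of "n - d" "s" x] dn wd by simp
      thus ?thesis using dp rb wlk0[OF xy(1)] by auto
    qed
  qed
  thus ?thesis using colA unfolding rainbow_connected_def by auto
qed

end



lemma three_el: assumes "3 \<le> card S"
  shows "\<exists>a b c. a \<in> S \<and> b \<in> S \<and> c \<in> S \<and> a \<noteq> b \<and> a \<noteq> c \<and> b \<noteq> c"
proof -
  from assms obtain a B where "S = insert a B" "a \<notin> B" "2 \<le> card B"
    using card_le_Suc_iff[of 2 S] by (auto simp: numeral_3_eq_3)
  moreover from \<open>2 \<le> card B\<close> obtain b C where "B = insert b C" "b \<notin> C" "1 \<le> card C"
    using card_le_Suc_iff[of 1 B] by (auto simp: numeral_2_eq_2)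
  moreover from \<open>1 \<le> card C\<close> obtain c D where "C = insert c D" "c \<notin> D"
    using card_le_Suc_iff[of 0 C] by auto
  ultimately show ?thesis by blast
qed

theorem theorem4:
  fixes n :: nat and A :: "(nat \<times> nat) set"
  assumes "n \<ge> 3"
    and "A \<subseteq> bicycle_arcs n"
    and "strongly_connected {0..<n} A"
    and "card (asym_arcs A) \<ge> 1"
  shows "(card (asym_arcs A) \<le> 2 \<longrightarrow> rc {0..<n} A = n - 1)
       \<and> (card (asym_arcs A) \<ge> 3 \<longrightarrow> rc {0..<n} A = n \<and> src {0..<n} A = n)"
proof -
  interpret S: cycS n A using assms by unfold_locales auto
  let ?S = "asym_arcs A"
  have fin: "finite ?S" and ne: "?S \<noteq> {}" using assms(4) card_gt_0_iff[of ?S] by auto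
  then obtain ta va where tav: "(ta, va) \<in> ?S" by auto
  then obtain s where s: "s = 1 \<or> s = -1" and va: "va = S.stp s ta" and ta: "ta < n"
    using S.asym_dir by blast
  have as: "(ta, S.stp s ta) \<in> ?S" using tav va by simp
  have Sdir: "u < n \<and> v = S.stp s u" if "(u, v) \<in> ?S" for u v
    using S.same_dir[OF s ta as that] .
  have str_rc: "rainbow_connected {0..<n} A c k" if "strongly_rainbow_connected {0..<n} A c k" for c k
    using that unfolding strongly_rainbow_connected_def rainbow_connected_def by blast
  have srcub: "strongly_rainbow_connected {0..<n} A S.ecol n" by (rule S.src_ub)
  have P1: "rc {0..<n} A = n - 1" if c2: "card ?S \<le> 2"
  proof -
    have "\<exists>tb. tb < n \<and> ta \<noteq> tb \<and> (\<forall>w. w < n \<longrightarrow> (w, S.stp s w) \<in> ?S \<longrightarrow> w = ta \<or> w = tb)"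
    proof (cases "\<exists>w<n. w \<noteq> ta \<and> (w, S.stp s w) \<in> ?S")
      case True
      then obtain tb where tb: "tb < n" "tb \<noteq> ta" "(tb, S.stp s tb) \<in> ?S" by blast
      have "\<forall>w. w < n \<longrightarrow> (w, S.stp s w) \<in> ?S \<longrightarrow> w = ta \<or> w = tb"
      proof (intro allI impI, rule ccontr)
        fix w assume w: "w < n" "(w, S.stp s w) \<in> ?S" "\<not> (w = ta \<or> w = tb)"
        have "{(ta, S.stp s ta), (tb, S.stp s tb), (w, S.stp s w)} \<subseteq> ?S" using as tb w by auto
        hence "card {(ta, S.stp s ta), (tb, S.stp s tb), (w, S.stp s w)} \<le> card ?S"
          using fin by (rule card_mono[rotated])
        moreover have "card {(ta, S.stp s ta), (tb, S.stp s tb), (w, S.stp s w)} = 3"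
          using tb w by auto
        ultimately show False using c2 by simp
      qed
      thus ?thesis using tb by blast
    next
      case False
      thus ?thesis using S.stp_self[OF s ta] S.stp_lt[of s ta] by (intro exI[of _ "S.stp s ta"]) auto
    qed
    then obtain tb where tb: "tb < n" "ta \<noteq> tb"
      and hyp: "\<And>w. w < n \<Longrightarrow> (w, S.stp s w) \<in> ?S \<Longrightarrow> w = ta \<or> w = tb" by blast
    obtain c where c: "rainbow_connected {0..<n} A c (n - 1)"
      using S.ub2[OF s ta tb(1) tb(2) as hyp] by blast
    show ?thesis unfolding rc_def
    proof (rule Least_equality)
      show "\<exists>c. rainbow_connected {0..<n} A c (n - 1)" using c by blast
      show "n - 1 \<le> k" if "\<exists>c. rainbow_connected {0..<n} A c k" for k
        using that S.lb1[OF _ s ta as] by blast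
    qed
  qed
  have P2: "rc {0..<n} A = n \<and> src {0..<n} A = n" if c3: "card ?S \<ge> 3"
  proof -
    obtain a b c where abc: "a \<in> ?S" "b \<in> ?S" "c \<in> ?S" "a \<noteq> b" "a \<noteq> c" "b \<noteq> c"
      using three_el[OF c3] by blast
    obtain t1 t2 t3 where t: "a = (t1, S.stp s t1)" "b = (t2, S.stp s t2)" "c = (t3, S.stp s t3)"
      "t1 < n" "t2 < n" "t3 < n"
      using Sdir abc(1-3) by (metis prod.collapse)
    have LB: "n \<le> k" if "rainbow_connected {0..<n} A cc k" for cc k
      using S.lb3[OF that s t(4-6)] abc t by auto
    have "rc {0..<n} A = n" unfolding rc_def
    proof (rule Least_equality)
      show "\<exists>c. rainbow_connected {0..<n} A c n" using str_rc[OF srcub] by blast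
      show "n \<le> k" if "\<exists>c. rainbow_connected {0..<n} A c k" for k using that LB by blast
    qed
    moreover have "src {0..<n} A = n" unfolding src_def
    proof (rule Least_equality)
      show "\<exists>c. strongly_rainbow_connected {0..<n} A c n" using srcub by blast
      show "n \<le> k" if "\<exists>c. strongly_rainbow_connected {0..<n} A c k" for k
        using that LB str_rc by blast
    qed
    ultimately show ?thesis by simp
  qed
  show ?thesis using P1 P2 by blast
qed


end
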